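(* Let $a,b,c\in\mathbb{R}$ with $a,c\neq 0$ and let $(X,J_{a,b,c})$ be the compact almost-complex manifold described in the context. Then $h^{1,0}_{\mathrm{Dol}}=1$ (spanned by $\varphi^1$), $h^{2,0}_{\mathrm{Dol}}=0$, $h^{3,0}_{\mathrm{Dol}}=0$.
   Context: General notions. For an almost-complex manifold $(X,J)$, $A^k(X)=\bigoplus_{p+q=k}A^{p,q}(X)$ and $d=\mu+\partial+\overline{\partial}+\bar\mu$ with $\mu:A^{p,q}\to A^{p+2,q-1}$, $\partial:A^{p,q}\to A^{p+1,q}$, $\overline{\partial}:A^{p,q}\to A^{p,q+1}$, $\bar\mu:A^{p,q}\to A^{p-1,q+2}$. The almost-complex Dolbeault cohomology (of Cirici–Wilson) in bidegree $(p,0)$ is $H^{p,0}_{\mathrm{Dol}}(X)=\{\psi\in A^{p,0}(X):\overline{\partial}\psi=0,\ \bar\mu\psi=0\}$, and $h^{p,0}_{\mathrm{Dol}}$ is its complex dimension. The manifold. Let $G$ be the Lie group $\mathbb{R}^2\ltimes_\Phi\mathbb{R}^4$ with coordinates $(t,x,y_1,y_2,z_1,z_2)$ and product $(t,x,y_1,y_2,z_1,z_2)*(t',x',y_1',y_2',z_1',z_2')=(t+t',x+x',y_1'e^t+xz_1'e^t+y_1,\,y_2'e^{-t}+xz_2'e^{-t}+y_2,\,z_1'e^t+z_1,\,z_2'e^{-t}+z_2)$. Let $B\in SL(2,\mathbb{Z})$ have distinct eigenvalues $e^{a_0},e^{-a_0}$ ($a_0>0$) and $P$ real invertible with $PBP^{-1}=\mathrm{diag}(e^{a_0},e^{-a_0})$.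 Let $\Gamma$ be the lattice of elements with $t\in a_0\mathbb{Z}$, $x\in\mathbb{Z}$, $(y_1,y_2)=(m_1,m_2)P^t$, $(z_1,z_2)=(n_1,n_2)P^t$, $m_i,n_i\in\mathbb{Z}$, and $X=\Gamma\backslash G$. Left-invariant $1$-forms: $e^1=dt$, $e^2=dx$, $e^3=e^{-t}dy_1-xe^{-t}dz_1$, $e^4=e^{t}dy_2-xe^{t}dz_2$, $e^5=e^{-t}dz_1$, $e^6=e^tdz_2$, with $de^1=de^2=0$, $de^3=-e^{13}-e^{25}$, $de^4=e^{14}-e^{26}$, $de^5=-e^{15}$, $de^6=e^{16}$. The structures. For $a,b,c\in\mathbb{R}$, $a,c\neq0$: $J_{a,b,c}$ is the almost-complex structure whose $(1,0)$-forms are spanned by $\varphi^1=ae^1+ie^2$, $\varphi^2=be^5+ce^3+ie^6$, $\varphi^3=ce^4+ie^5$ (it is compatible with the symplectic form $\omega_{a,b,c}=ae^{12}+be^{56}+c(e^{36}+e^{45})$). *)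

theory Defs
  imports "HOL-Analysis.Analysis"
begin

text \<open>An element of the exterior algebra of a 6-dimensional complex space with a fixed
  ordered basis v_0,...,v_5 is represented by its coefficient function: the coefficient of
  the monomial v_{i1} wedge ... wedge v_{ip} (i1 < ... < ip) is the value at {i1,...,ip}.
  Only subsets of {0..<6} are meaningful.\<close>

type_synonym lform = "nat set \<Rightarrow> complex"

definition lzero :: lform where "lzero = (\<lambda>K. 0)"
definition ladd :: "lform \<Rightarrow> lform \<Rightarrow> lform" where "ladd \<alpha> \<beta> = (\<lambda>K. \<alpha> K + \<beta> K)"
definition lscale :: "complex \<Rightarrow> lform \<Rightarrow> lform" where "lscale z \<alpha> = (\<lambda>K. z * \<alpha> K)"
definition lsum :: "('i \<Rightarrow> lform) \<Rightarrow> 'i set \<Rightarrow> lform" where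
  "lsum F S = (\<lambda>K. \<Sum>i\<in>S. F i K)"
definition mono :: "nat set \<Rightarrow> lform" where "mono I = (\<lambda>K. if K = I then 1 else 0)"
definition gen :: "nat \<Rightarrow> lform" where "gen i = mono {i}"

text \<open>sign of the shuffle bringing (I,J) (each listed increasingly) into increasing order\<close>
definition shuffle_sign :: "nat set \<Rightarrow> nat set \<Rightarrow> complex" where
  "shuffle_sign I J = (-1) ^ card {(i,j). i \<in> I \<and> j \<in> J \<and> j < i}"

definition wedge :: "lform \<Rightarrow> lform \<Rightarrow> lform" where
  "wedge \<alpha> \<beta> = (\<lambda>K. \<Sum>I\<in>Pow K. shuffle_sign I (K - I) * \<alpha> I * \<beta> (K - I))"

definition wedge_list :: "lform list \<Rightarrow> lform" where
  "wedge_list vs = foldr wedge vs (mono {})"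

definition ext_map :: "(nat \<Rightarrow> lform) \<Rightarrow> lform \<Rightarrow> lform" where
  "ext_map img \<alpha> = lsum (\<lambda>J. lscale (\<alpha> J) (wedge_list (map img (sorted_list_of_set J)))) (Pow {0..<6})"

text \<open>Points of G = R^2 semidirect R^4 are vectors g with coordinates
  (t,x,y1,y2,z1,z2) = (g$1,g$2,g$3,g$4,g$5,g$6).\<close>

definition Gmul :: "real^6 \<Rightarrow> real^6 \<Rightarrow> real^6" where
  "Gmul g h = (\<chi> i.
     if i = 1 then g$1 + h$1
     else if i = 2 then g$2 + h$2
     else if i = 3 then h$3 * exp (g$1) + g$2 * h$5 * exp (g$1) + g$3
     else if i = 4 then h$4 * exp (- g$1) + g$2 * h$6 * exp (- g$1) + g$4
     else if i = 5 then h$5 * exp (g$1) + g$5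
     else h$6 * exp (- g$1) + g$6)"

definition Lattice :: "real \<Rightarrow> real^2^2 \<Rightarrow> (real^6) set" where
  "Lattice a0 P = {g. \<exists>k n m1 m2 n1 n2 :: int.
      g$1 = a0 * of_int k \<and> g$2 = of_int n \<and>
      g$3 = of_int m1 * P$1$1 + of_int m2 * P$1$2 \<and>
      g$4 = of_int m1 * P$2$1 + of_int m2 * P$2$2 \<and>
      g$5 = of_int n1 * P$1$1 + of_int n2 * P$1$2 \<and>
      g$6 = of_int n1 * P$2$1 + of_int n2 * P$2$2}"

text \<open>functions on X = Gamma \ G = left-Gamma-invariant functions on G\<close>
definition gamma_inv :: "real \<Rightarrow> real^2^2 \<Rightarrow> (real^6 \<Rightarrow> complex) \<Rightarrow> bool" where
  "gamma_inv a0 P f \<longleftrightarrow> (\<forall>\<gamma>\<in>Lattice a0 P. \<forall>g. f (Gmul \<gamma> g) = f g)"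

definition partial :: "6 \<Rightarrow> (real^6 \<Rightarrow> complex) \<Rightarrow> real^6 \<Rightarrow> complex" where
  "partial j f g = vector_derivative (\<lambda>s. f (g + s *\<^sub>R axis j 1)) (at 0)"

coinductive smooth :: "(real^6 \<Rightarrow> complex) \<Rightarrow> bool" where
  "(\<forall>g. f differentiable (at g)) \<Longrightarrow> (\<forall>j. smooth (partial j f)) \<Longrightarrow> smooth f"

text \<open>Real left-invariant coframe e^1..e^6 is indexed 0..5. Complex coframe
  theta_0,theta_1,theta_2 = phi^1,phi^2,phi^3 and theta_3,theta_4,theta_5 their conjugates.\<close>

text \<open>d e^j, in the e-basis\<close>
definition de :: "nat \<Rightarrow> lform" where
  "de j = (if j = 2 then ladd (lscale (-1) (mono {0,2})) (lscale (-1) (mono {1,4}))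
      else if j = 3 then ladd (mono {0,3}) (lscale (-1) (mono {1,5}))
      else if j = 4 then lscale (-1) (mono {0,4})
      else if j = 5 then mono {0,5}
      else lzero)"

text \<open>coordinate differentials dt,dx,dy1,dy2,dz1,dz2 at g, in the e-basis\<close>
definition dcoord :: "real^6 \<Rightarrow> 6 \<Rightarrow> lform" where
  "dcoord g j = (let t = g$1; x = g$2 in
      if j = 1 then gen 0
      else if j = 2 then gen 1
      else if j = 3 then ladd (lscale (exp t) (gen 2)) (lscale (x * exp t) (gen 4))
      else if j = 4 then ladd (lscale (exp (-t)) (gen 3)) (lscale (x * exp (-t)) (gen 5))
      else if j = 5 then lscale (exp t) (gen 4)
      else lscale (exp (-t)) (gen 5))"

text \<open>theta_k = sum_j theta_coef k j e^j:
  phi^1 = a e^1 + i e^2, phi^2 = c e^3 + b e^5 + i e^6, phi^3 = c e^4 + i e^5\<close>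
definition theta_coef :: "real \<Rightarrow> real \<Rightarrow> real \<Rightarrow> nat \<Rightarrow> nat \<Rightarrow> complex" where
  "theta_coef a b c k j =
     (if k = 0 then (if j = 0 then of_real a else if j = 1 then \<i> else 0)
      else if k = 1 then (if j = 2 then of_real c else if j = 4 then of_real b else if j = 5 then \<i> else 0)
      else if k = 2 then (if j = 3 then of_real c else if j = 4 then \<i> else 0)
      else if k = 3 then (if j = 0 then of_real a else if j = 1 then - \<i> else 0)
      else if k = 4 then (if j = 2 then of_real c else if j = 4 then of_real b else if j = 5 then - \<i> else 0)
      else if k = 5 then (if j = 3 then of_real c else if j = 4 then - \<i> else 0)
      else 0)"

text \<open>the inverse change of basis: e^{j+1} expressed in the theta-basis
  e^1 = (th0+th3)/(2a), e^2 = (th0-th3)/(2i), e^3 = (th1+th4)/(2c) - (b/c) e^5,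
  e^4 = (th2+th5)/(2c), e^5 = (th2-th5)/(2i), e^6 = (th1-th4)/(2i)\<close>
definition e_in_theta :: "real \<Rightarrow> real \<Rightarrow> real \<Rightarrow> nat \<Rightarrow> lform" where
  "e_in_theta a b c j =
     (if j = 0 then lscale (1 / (2 * of_real a)) (ladd (gen 0) (gen 3))
      else if j = 1 then lscale (1 / (2 * \<i>)) (ladd (gen 0) (lscale (-1) (gen 3)))
      else if j = 2 then ladd (lscale (1 / (2 * of_real c)) (ladd (gen 1) (gen 4)))
                              (lscale (- of_real b / (of_real c * 2 * \<i>)) (ladd (gen 2) (lscale (-1) (gen 5))))
      else if j = 3 then lscale (1 / (2 * of_real c)) (ladd (gen 2) (gen 5))
      else if j = 4 then lscale (1 / (2 * \<i>)) (ladd (gen 2) (lscale (-1) (gen 5)))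
      else if j = 5 then lscale (1 / (2 * \<i>)) (ladd (gen 1) (lscale (-1) (gen 4)))
      else lzero)"

text \<open>change from e-basis coefficients to theta-basis coefficients\<close>
definition to_theta :: "real \<Rightarrow> real \<Rightarrow> real \<Rightarrow> lform \<Rightarrow> lform" where
  "to_theta a b c = ext_map (e_in_theta a b c)"

definition dtheta :: "real \<Rightarrow> real \<Rightarrow> real \<Rightarrow> nat \<Rightarrow> lform" where
  "dtheta a b c k = to_theta a b c (lsum (\<lambda>j. lscale (theta_coef a b c k j) (de j)) {0..<6})"

text \<open>d of a monomial theta_{k1} wedge ... wedge theta_{kp} (Leibniz rule)\<close>
primrec dmono_list :: "real \<Rightarrow> real \<Rightarrow> real \<Rightarrow> nat list \<Rightarrow> lform" where
  "dmono_list a b c [] = lzero"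
| "dmono_list a b c (k # ks) =
     ladd (wedge (dtheta a b c k) (wedge_list (map gen ks)))
          (lscale (-1) (wedge (gen k) (dmono_list a b c ks)))"

definition dfun :: "real \<Rightarrow> real \<Rightarrow> real \<Rightarrow> (real^6 \<Rightarrow> complex) \<Rightarrow> real^6 \<Rightarrow> lform" where
  "dfun a b c f g = to_theta a b c (lsum (\<lambda>j. lscale (partial j f g) (dcoord g j)) UNIV)"

text \<open>A complex form on X is written psi = sum_K psi_K theta^K with psi_K smooth
  Gamma-invariant functions on G; it is represented by g |-> (K |-> psi_K(g)).\<close>

definition dform :: "real \<Rightarrow> real \<Rightarrow> real \<Rightarrow> (real^6 \<Rightarrow> lform) \<Rightarrow> real^6 \<Rightarrow> lform" where
  "dform a b c \<psi> g = lsum (\<lambda>K. ladd (wedge (dfun a b c (\<lambda>h. \<psi> h K) g) (mono K))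
                                     (lscale (\<psi> g K) (dmono_list a b c (sorted_list_of_set K))))
                        (Pow {0..<6})"

definition bideg :: "nat \<Rightarrow> nat \<Rightarrow> nat set set" where
  "bideg p q = {K. K \<subseteq> {0..<6} \<and> card (K \<inter> {0,1,2}) = p \<and> card (K \<inter> {3,4,5}) = q}"

definition proj :: "nat \<Rightarrow> nat \<Rightarrow> lform \<Rightarrow> lform" where
  "proj p q \<alpha> = (\<lambda>K. if K \<in> bideg p q then \<alpha> K else 0)"

definition is_form :: "real \<Rightarrow> real^2^2 \<Rightarrow> nat \<Rightarrow> nat \<Rightarrow> (real^6 \<Rightarrow> lform) \<Rightarrow> bool" where
  "is_form a0 P p q \<psi> \<longleftrightarrow>
     (\<forall>K. (K \<notin> bideg p q \<longrightarrow> (\<forall>g. \<psi> g K = 0)) \<and> smooth (\<lambda>g. \<psi> g K) \<and> gamma_inv a0 P (\<lambda>g. \<psi> g K))"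

definition dbar :: "real \<Rightarrow> real \<Rightarrow> real \<Rightarrow> nat \<Rightarrow> nat \<Rightarrow> (real^6 \<Rightarrow> lform) \<Rightarrow> real^6 \<Rightarrow> lform" where
  "dbar a b c p q \<psi> g = proj p (q + 1) (dform a b c \<psi> g)"

definition mubar :: "real \<Rightarrow> real \<Rightarrow> real \<Rightarrow> nat \<Rightarrow> nat \<Rightarrow> (real^6 \<Rightarrow> lform) \<Rightarrow> real^6 \<Rightarrow> lform" where
  "mubar a b c p q \<psi> g = (if p = 0 then lzero else proj (p - 1) (q + 2) (dform a b c \<psi> g))"

definition H_Dol_p0 :: "real \<Rightarrow> real \<Rightarrow> real \<Rightarrow> real \<Rightarrow> real^2^2 \<Rightarrow> nat \<Rightarrow> (real^6 \<Rightarrow> lform) set" where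
  "H_Dol_p0 a b c a0 P p =
     {\<psi>. is_form a0 P p 0 \<psi> \<and> (\<forall>g. dbar a b c p 0 \<psi> g = lzero) \<and> (\<forall>g. mubar a b c p 0 \<psi> g = lzero)}"

end

theory Submission
  imports Defs "HOL-Complex_Analysis.Complex_Analysis"
begin


lemma line_vd:
  fixes F :: "real^6 \<Rightarrow> complex"
  assumes "(F has_derivative D) (at (q + s0 *\<^sub>R v))"
  shows "((\<lambda>s. F (q + s *\<^sub>R v)) has_vector_derivative D v) (at s0)"
proof -
  have "((\<lambda>s. q + s *\<^sub>R v) has_derivative (\<lambda>s. s *\<^sub>R v)) (at s0)"
    by (auto intro!: derivative_eq_intros)
  then have "((\<lambda>s. F (q + s *\<^sub>R v)) has_derivative (\<lambda>s. D (s *\<^sub>R v))) (at s0)"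
    using has_derivative_compose[of "\<lambda>s. q + s *\<^sub>R v" _ s0 UNIV F D] assms by (simp add: o_def)
  moreover have "(\<lambda>s. D (s *\<^sub>R v)) = (\<lambda>s. s *\<^sub>R D v)"
    using assms has_derivative_linear linear_scale by blast
  ultimately show ?thesis by (simp add: has_vector_derivative_def)
qed

lemma partial_eq:
  fixes F :: "real^6 \<Rightarrow> complex"
  assumes "(F has_derivative D) (at p)"
  shows "partial j F p = D (axis j 1)"
proof -
  have "((\<lambda>s. F (p + s *\<^sub>R axis j 1)) has_vector_derivative D (axis j 1)) (at 0)"
    using line_vd[of F D p 0 "axis j 1"] assms by simp
  then show ?thesis unfolding partial_def by (rule vector_derivative_at)
qed

lemma line_vd_partial:
  fixes F :: "real^6 \<Rightarrow> complex"
  assumes "F differentiable (at (q + s0 *\<^sub>R axis j 1))"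
  shows "((\<lambda>s. F (q + s *\<^sub>R axis j 1)) has_vector_derivative partial j F (q + s0 *\<^sub>R axis j 1)) (at s0)"
proof -
  obtain D where D: "(F has_derivative D) (at (q + s0 *\<^sub>R axis j 1))"
    using assms by (auto simp: differentiable_def)
  show ?thesis using line_vd[OF D] partial_eq[OF D] by simp
qed


lemma vd_bound:
  fixes f :: "real \<Rightarrow> complex"
  assumes d: "\<And>x. \<bar>x\<bar> \<le> \<bar>t\<bar> \<Longrightarrow> (f has_vector_derivative f' x) (at x)"
    and b: "\<And>x. \<bar>x\<bar> \<le> \<bar>t\<bar> \<Longrightarrow> norm (f' x) \<le> B"
  shows "norm (f t - f 0) \<le> B * \<bar>t\<bar>"
proof (cases "t = 0")
  case False
  show ?thesis
  proof (cases "t > 0")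
    case True
    have "norm (f t - f 0) \<le> B * t - B * 0"
    proof (rule differentiable_bound_general[where f'=f' and \<phi>'="\<lambda>_. B"])
      show "continuous_on {0..t} f" using True
        by (intro continuous_at_imp_continuous_on ballI has_vector_derivative_continuous[OF d]) auto
      show "continuous_on {0..t} (\<lambda>x. B * x)" by (intro continuous_intros)
      fix x assume "0 < x" "x < t"
      then show "(f has_vector_derivative f' x) (at x)" "norm (f' x) \<le> B" using d b by auto
      show "((\<lambda>x. B * x) has_vector_derivative B) (at x)"
        using has_vector_derivative_def by (auto intro!: derivative_eq_intros)
    qed (use True in auto)
    then show ?thesis using True by simp
  next
    case False
    with \<open>t \<noteq> 0\<close> have t: "t < 0" by simp
    have "norm (f 0 - f t) \<le> B * 0 - B * t"
    proof (rule differentiable_bound_general[where f'=f' and \<phi>'="\<lambda>_. B"])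
      show "continuous_on {t..0} f" using t
        by (intro continuous_at_imp_continuous_on ballI has_vector_derivative_continuous[OF d]) auto
      show "continuous_on {t..0} (\<lambda>x. B * x)" by (intro continuous_intros)
      fix x assume "t < x" "x < 0"
      then show "(f has_vector_derivative f' x) (at x)" "norm (f' x) \<le> B" using d b by auto
      show "((\<lambda>x. B * x) has_vector_derivative B) (at x)"
        using has_vector_derivative_def by (auto intro!: derivative_eq_intros)
    qed (use t in auto)
    then show ?thesis using t by (simp add: norm_minus_commute)
  qed
qed simp


lemma mixed_approx:
  fixes F :: "real^6 \<Rightarrow> complex"
  assumes dF: "\<And>p. F differentiable (at p)" and dG: "\<And>p. partial i F differentiable (at p)"
    and cont: "continuous (at g) (partial j (partial i F))" and e: "e > 0"
  shows "\<exists>\<delta>>0. \<forall>s t. \<bar>s\<bar> \<le> \<delta> \<longrightarrow> \<bar>t\<bar> \<le> \<delta> \<longrightarrow>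
     norm (F (g + s *\<^sub>R axis i 1 + t *\<^sub>R axis j 1) - F (g + s *\<^sub>R axis i 1) - F (g + t *\<^sub>R axis j 1) + F g
           - (s * t) *\<^sub>R partial j (partial i F) g) \<le> e * \<bar>t\<bar> * \<bar>s\<bar>"
proof -
  define G where "G = partial i F"
  define D where "D = partial j G g"
  define u :: "real^6" where "u = axis i 1"
  define v :: "real^6" where "v = axis j 1"
  have nu: "norm u = 1" "norm v = 1" by (simp_all add: u_def v_def)
  obtain d where d: "d > 0" "\<And>p. dist p g < d \<Longrightarrow> dist (partial j G p) D < e"
    using cont e unfolding continuous_at_eps_delta G_def D_def by blast
  define \<delta> where "\<delta> = d / 3"
  have \<delta>: "\<delta> > 0" using d by (simp add: \<delta>_def)
  have c1: "norm (partial j G (g + x *\<^sub>R u + y *\<^sub>R v) - D) \<le> e" if "\<bar>x\<bar> \<le> \<delta>" "\<bar>y\<bar> \<le> \<delta>" for x y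
  proof -
    have "norm (x *\<^sub>R u + y *\<^sub>R v) \<le> \<bar>x\<bar> + \<bar>y\<bar>"
      using norm_triangle_ineq[of "x *\<^sub>R u" "y *\<^sub>R v"] nu by simp
    also have "\<dots> < d" using that d \<delta>_def by simp
    finally have "dist (g + x *\<^sub>R u + y *\<^sub>R v) g < d" by (simp add: dist_norm add.assoc)
    then show ?thesis using d(2) by (simp add: dist_norm less_imp_le)
  qed
  have c2: "norm (G (g + x *\<^sub>R u + t *\<^sub>R v) - G (g + x *\<^sub>R u) - t *\<^sub>R D) \<le> e * \<bar>t\<bar>"
    if "\<bar>x\<bar> \<le> \<delta>" "\<bar>t\<bar> \<le> \<delta>" for x t
  proof -
    have "norm ((\<lambda>y. G (g + x *\<^sub>R u + y *\<^sub>R v) - y *\<^sub>R D) t - (\<lambda>y. G (g + x *\<^sub>R u + y *\<^sub>R v) - y *\<^sub>R D) 0) \<le> e * \<bar>t\<bar>"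
    proof (rule vd_bound)
      fix y assume y: "\<bar>y\<bar> \<le> \<bar>t\<bar>"
      show "((\<lambda>y. G (g + x *\<^sub>R u + y *\<^sub>R v) - y *\<^sub>R D) has_vector_derivative
              partial j G (g + x *\<^sub>R u + y *\<^sub>R v) - D) (at y)"
        unfolding v_def
        by (intro has_vector_derivative_diff line_vd_partial)
           (auto simp: G_def dG intro!: derivative_eq_intros simp: has_vector_derivative_def)
      show "norm (partial j G (g + x *\<^sub>R u + y *\<^sub>R v) - D) \<le> e"
        using c1[of x y] that y by simp
    qed
    then show ?thesis by (simp add: algebra_simps)
  qed
  show ?thesis
  proof (intro exI[of _ \<delta>] conjI allI impI \<delta>)
    fix s t assume s: "\<bar>s\<bar> \<le> \<delta>" and t: "\<bar>t\<bar> \<le> \<delta>"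
    define \<phi> where "\<phi> = (\<lambda>x. F ((g + t *\<^sub>R v) + x *\<^sub>R u) - F (g + x *\<^sub>R u) - (x * t) *\<^sub>R D)"
    have "norm (\<phi> s - \<phi> 0) \<le> (e * \<bar>t\<bar>) * \<bar>s\<bar>"
    proof (rule vd_bound)
      fix x assume x: "\<bar>x\<bar> \<le> \<bar>s\<bar>"
      show "(\<phi> has_vector_derivative (partial i F ((g + t *\<^sub>R v) + x *\<^sub>R u) - partial i F (g + x *\<^sub>R u) - t *\<^sub>R D)) (at x)"
        unfolding \<phi>_def u_def
        apply (intro has_vector_derivative_diff line_vd_partial dF)
        using line_vd_partial[of F g x i, OF dF]
        by (auto intro!: derivative_eq_intros simp: has_vector_derivative_def)
      have eq: "(g + t *\<^sub>R v) + x *\<^sub>R u = g + x *\<^sub>R u + t *\<^sub>R v" by (simp add: algebra_simps)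
      show "norm (partial i F ((g + t *\<^sub>R v) + x *\<^sub>R u) - partial i F (g + x *\<^sub>R u) - t *\<^sub>R D) \<le> e * \<bar>t\<bar>"
        unfolding eq using c2[of x t] x s t by (simp add: G_def)
    qed
    moreover have "\<phi> s - \<phi> 0 = F (g + s *\<^sub>R u + t *\<^sub>R v) - F (g + s *\<^sub>R u) - F (g + t *\<^sub>R v) + F g - (s * t) *\<^sub>R D"
      by (simp add: \<phi>_def algebra_simps)
    ultimately show "norm (F (g + s *\<^sub>R axis i 1 + t *\<^sub>R axis j 1) - F (g + s *\<^sub>R axis i 1) - F (g + t *\<^sub>R axis j 1) + F g
           - (s * t) *\<^sub>R partial j (partial i F) g) \<le> e * \<bar>t\<bar> * \<bar>s\<bar>"
      by (simp add: u_def v_def D_def G_def)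
  qed
qed


lemma partial_sym:
  fixes F :: "real^6 \<Rightarrow> complex"
  assumes dF: "\<And>p. F differentiable (at p)"
    and dGi: "\<And>p. partial i F differentiable (at p)" and dGj: "\<And>p. partial j F differentiable (at p)"
    and ci: "continuous (at g) (partial j (partial i F))" and cj: "continuous (at g) (partial i (partial j F))"
  shows "partial j (partial i F) g = partial i (partial j F) g"
proof -
  define D1 where "D1 = partial j (partial i F) g"
  define D2 where "D2 = partial i (partial j F) g"
  have "norm (D1 - D2) \<le> 2 * e" if e: "e > 0" for e
  proof -
    obtain d1 where d1: "d1 > 0" "\<And>s t. \<bar>s\<bar> \<le> d1 \<Longrightarrow> \<bar>t\<bar> \<le> d1 \<Longrightarrow>
       norm (F (g + s *\<^sub>R axis i 1 + t *\<^sub>R axis j 1) - F (g + s *\<^sub>R axis i 1) - F (g + t *\<^sub>R axis j 1) + F g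
           - (s * t) *\<^sub>R D1) \<le> e * \<bar>t\<bar> * \<bar>s\<bar>"
      using mixed_approx[OF dF dGi ci e] unfolding D1_def by blast
    obtain d2 where d2: "d2 > 0" "\<And>s t. \<bar>s\<bar> \<le> d2 \<Longrightarrow> \<bar>t\<bar> \<le> d2 \<Longrightarrow>
       norm (F (g + s *\<^sub>R axis j 1 + t *\<^sub>R axis i 1) - F (g + s *\<^sub>R axis j 1) - F (g + t *\<^sub>R axis i 1) + F g
           - (s * t) *\<^sub>R D2) \<le> e * \<bar>t\<bar> * \<bar>s\<bar>"
      using mixed_approx[OF dF dGj cj e] unfolding D2_def by blast
    define r where "r = min d1 d2"
    have r: "r > 0" "\<bar>r\<bar> \<le> d1" "\<bar>r\<bar> \<le> d2" using d1 d2 by (auto simp: r_def)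
    define Q where "Q = F (g + r *\<^sub>R axis i 1 + r *\<^sub>R axis j 1) - F (g + r *\<^sub>R axis i 1) - F (g + r *\<^sub>R axis j 1) + F g"
    have q1: "norm (Q - (r * r) *\<^sub>R D1) \<le> e * r * r" using d1(2)[OF r(2) r(2)] r by (simp add: Q_def)
    have "F (g + r *\<^sub>R axis j 1 + r *\<^sub>R axis i 1) = F (g + r *\<^sub>R axis i 1 + r *\<^sub>R axis j 1)"
      by (simp add: algebra_simps)
    then have q2: "norm (Q - (r * r) *\<^sub>R D2) \<le> e * r * r" using d2(2)[OF r(3) r(3)] r by (simp add: Q_def algebra_simps)
    have "norm ((r * r) *\<^sub>R (D1 - D2)) = norm ((Q - (r * r) *\<^sub>R D2) - (Q - (r * r) *\<^sub>R D1))"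
      by (simp add: algebra_simps)
    also have "\<dots> \<le> norm (Q - (r * r) *\<^sub>R D2) + norm (Q - (r * r) *\<^sub>R D1)" by (rule norm_triangle_ineq4)
    also have "\<dots> \<le> (r * r) * (2 * e)" using q1 q2 by (simp add: algebra_simps)
    finally have "(r * r) * norm (D1 - D2) \<le> (r * r) * (2 * e)" using r by simp
    then show ?thesis using r by (simp add: mult_le_cancel_left_pos)
  qed
  then have "norm (D1 - D2) = 0"
  proof (cases "norm (D1 - D2) = 0")
    case False
    then have "norm (D1 - D2) / 4 > 0" by simp
    from \<open>\<And>e. e > 0 \<Longrightarrow> norm (D1 - D2) \<le> 2 * e\<close>[OF this] False show ?thesis by simp
  qed
  then show ?thesis by (simp add: D1_def D2_def)
qed


lemma smooth_D:
  assumes "smooth f"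
  shows "\<And>g. f differentiable (at g)" "\<And>j. smooth (partial j f)"
  using assms by (auto elim: smooth.cases)

lemma vd0:
  fixes Q :: "real^6 \<Rightarrow> complex"
  assumes "\<And>p. Q differentiable (at p)"
  shows "((\<lambda>s. Q (g + s *\<^sub>R axis j 1)) has_vector_derivative partial j Q g) (at 0)"
  using line_vd_partial[of Q g 0 j] assms by simp

lemma vd_zero_fun:
  fixes Q :: "real^6 \<Rightarrow> complex"
  assumes "\<And>p. Q p = 0" "((\<lambda>s. Q (g + s *\<^sub>R axis j 1)) has_vector_derivative D) (at 0)"
  shows "D = 0"
proof -
  have "((\<lambda>s. Q (g + s *\<^sub>R axis j 1)) has_vector_derivative 0) (at 0)"
    using assms(1) by simp
  then show ?thesis using assms(2) vector_derivative_unique_at by blast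
qed

lemma axis_comp: "(g + s *\<^sub>R axis j 1) $ k = (if k = j then g $ k + s else g $ k)"
  by (simp add: axis_def)
lemma axis_nth1: "axis j (1::real) $ k = (if k = j then 1 else 0)"
  by (simp add: axis_def)

lemma P_zero:
  fixes f :: "real^6 \<Rightarrow> complex"
  assumes a: "a \<noteq> 0" and c: "c \<noteq> 0" and sm: "smooth f"
    and W: "\<And>g. partial 1 f g + \<i> * of_real a * partial 2 f g = 0"
    and A: "\<And>g. of_real (exp (g$1)) * partial 3 f g + \<i> * of_real c * (of_real (exp (- g$1)) * (of_real (g$2) * partial 4 f g + partial 6 f g)) = 0"
    and B: "\<And>g. (\<i> * of_real c * of_real (g$2) - \<i> * of_real b) * of_real (exp (g$1)) * partial 3 f g + of_real (exp (- g$1)) * partial 4 f g + \<i> * of_real c * (of_real (exp (g$1)) * partial 5 f g) = 0"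
  shows "partial 3 f g = 0 \<and> partial 4 f g = 0 \<and> partial 5 f g = 0 \<and> partial 6 f g = 0"
proof -
  have df: "\<And>p. f differentiable (at p)" using smooth_D(1)[OF sm] .
  have dP: "\<And>k p. partial k f differentiable (at p)" using smooth_D(1)[OF smooth_D(2)[OF sm]] by blast
  have dPP: "\<And>k j p. partial j (partial k f) differentiable (at p)" using smooth_D(1)[OF smooth_D(2)[OF smooth_D(2)[OF sm]]] by blast
  have cPP: "continuous (at p) (partial j (partial k f))" for k j p
    using dPP differentiable_imp_continuous_within by blast
  have sym: "partial j (partial k f) p = partial k (partial j f) p" for j k p
    by (rule partial_sym[OF df dP dP cPP cPP])
  note vds = vd0[OF dP]
  have Wk: "partial k (partial 1 f) g + \<i> * of_real a * partial k (partial 2 f) g = 0" for k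
  proof (rule vd_zero_fun[where g=g and j=k, OF W])
    show "((\<lambda>s. partial 1 f (g + s *\<^sub>R axis k 1) + \<i> * complex_of_real a * partial 2 f (g + s *\<^sub>R axis k 1)) has_vector_derivative
        partial k (partial 1 f) g + \<i> * complex_of_real a * partial k (partial 2 f) g) (at 0)"
      by (rule derivative_eq_intros vds | simp)+
  qed
  have Ws: "partial 1 (partial k f) g + \<i> * of_real a * partial 2 (partial k f) g = 0" for k
    using Wk[of k] by (simp add: sym[of k 1] sym[of k 2])
  define E where "E = complex_of_real (exp (g$1))"
  define Ei where "Ei = complex_of_real (exp (- g$1))"
  define x where "x = complex_of_real (g$2)"
  define P where "P = (\<lambda>k. partial k f g)"
  define Q where "Q = (\<lambda>j k. partial j (partial k f) g)"
  have A1: "E * P 3 + E * Q 1 3 + \<i> * of_real c * (- Ei * (x * P 4 + P 6) + Ei * (x * Q 1 4 + Q 1 6)) = 0"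
  proof -
    have "((\<lambda>s. (\<lambda>p. of_real (exp (p$1)) * partial 3 f p + \<i> * of_real c * (of_real (exp (- p$1)) * (of_real (p$2) * partial 4 f p + partial 6 f p))) (g + s *\<^sub>R axis 1 1)) has_vector_derivative
      E * P 3 + E * Q 1 3 + \<i> * of_real c * (- Ei * (x * P 4 + P 6) + Ei * (x * Q 1 4 + Q 1 6))) (at 0)"
      unfolding E_def Ei_def x_def P_def Q_def
      apply (simp add: axis_comp)
      apply (rule derivative_eq_intros vds | simp add: axis_nth1)+
      done
    then show ?thesis by (rule vd_zero_fun[OF A, rotated])
  qed
  have A2: "E * Q 2 3 + \<i> * of_real c * (Ei * (P 4 + x * Q 2 4 + Q 2 6)) = 0"
  proof -
    have "((\<lambda>s. (\<lambda>p. of_real (exp (p$1)) * partial 3 f p + \<i> * of_real c * (of_real (exp (- p$1)) * (of_real (p$2) * partial 4 f p + partial 6 f p))) (g + s *\<^sub>R axis 2 1)) has_vector_derivative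
      E * Q 2 3 + \<i> * of_real c * (Ei * (P 4 + x * Q 2 4 + Q 2 6))) (at 0)"
      unfolding E_def Ei_def x_def P_def Q_def
      apply (simp add: axis_comp)
      apply (rule derivative_eq_intros vds | simp add: axis_nth1)+
      apply ((simp add: algebra_simps)?)
      done
    then show ?thesis by (rule vd_zero_fun[OF A, rotated])
  qed
  have B1: "(\<i> * of_real c * x - \<i> * of_real b) * (E * P 3 + E * Q 1 3) - Ei * P 4 + Ei * Q 1 4 + \<i> * of_real c * (E * P 5 + E * Q 1 5) = 0"
  proof -
    have "((\<lambda>s. (\<lambda>p. (\<i> * of_real c * of_real (p$2) - \<i> * of_real b) * of_real (exp (p$1)) * partial 3 f p + of_real (exp (- p$1)) * partial 4 f p + \<i> * of_real c * (of_real (exp (p$1)) * partial 5 f p)) (g + s *\<^sub>R axis 1 1)) has_vector_derivative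
      (\<i> * of_real c * x - \<i> * of_real b) * (E * P 3 + E * Q 1 3) - Ei * P 4 + Ei * Q 1 4 + \<i> * of_real c * (E * P 5 + E * Q 1 5)) (at 0)"
      unfolding E_def Ei_def x_def P_def Q_def
      apply (simp add: axis_comp)
      apply (rule derivative_eq_intros vds | simp add: axis_nth1)+
      apply ((simp add: algebra_simps)?)
      done
    then show ?thesis by (rule vd_zero_fun[OF B, rotated])
  qed
  have B2: "\<i> * of_real c * E * P 3 + (\<i> * of_real c * x - \<i> * of_real b) * E * Q 2 3 + Ei * Q 2 4 + \<i> * of_real c * (E * Q 2 5) = 0"
  proof -
    have "((\<lambda>s. (\<lambda>p. (\<i> * of_real c * of_real (p$2) - \<i> * of_real b) * of_real (exp (p$1)) * partial 3 f p + of_real (exp (- p$1)) * partial 4 f p + \<i> * of_real c * (of_real (exp (p$1)) * partial 5 f p)) (g + s *\<^sub>R axis 2 1)) has_vector_derivative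
      \<i> * of_real c * E * P 3 + (\<i> * of_real c * x - \<i> * of_real b) * E * Q 2 3 + Ei * Q 2 4 + \<i> * of_real c * (E * Q 2 5)) (at 0)"
      unfolding E_def Ei_def x_def P_def Q_def
      apply (simp add: axis_comp)
      apply (rule derivative_eq_intros vds | simp add: axis_nth1)+
      apply ((simp add: algebra_simps)?)
      done
    then show ?thesis by (rule vd_zero_fun[OF B, rotated])
  qed
  have Wq: "Q 1 k + \<i> * of_real a * Q 2 k = 0" for k using Ws[of k] by (simp add: Q_def)
  have A0: "E * P 3 + \<i> * of_real c * (Ei * (x * P 4 + P 6)) = 0" using A[of g] by (simp add: E_def Ei_def x_def P_def)
  have B0: "(\<i> * of_real c * x - \<i> * of_real b) * E * P 3 + Ei * P 4 + \<i> * of_real c * (E * P 5) = 0"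
    using B[of g] by (simp add: E_def Ei_def x_def P_def)
  define u3 where "u3 = E * P 3"
  define u4 where "u4 = Ei * P 4"
  define u5 where "u5 = E * P 5"
  define u6 where "u6 = Ei * P 6"
  define C where "C = complex_of_real c"
  define aa where "aa = complex_of_real a"
  have i2: "\<i> * \<i> = -1" by simp
  have eA: "u3 + \<i> * C * x * u4 + \<i> * C * u6 = 0" using A0 by (simp add: u3_def u4_def u6_def C_def algebra_simps)
  have eA': "u3 - \<i> * C * x * u4 - \<i> * C * u6 - aa * C * u4 = 0"
  proof -
    have "u3 - \<i> * C * x * u4 - \<i> * C * u6 - aa * C * u4 =
      (E * P 3 + E * Q 1 3 + \<i> * of_real c * (- Ei * (x * P 4 + P 6) + Ei * (x * Q 1 4 + Q 1 6)))
      + \<i> * aa * (E * Q 2 3 + \<i> * of_real c * (Ei * (P 4 + x * Q 2 4 + Q 2 6)))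
      - E * (Q 1 3 + \<i> * aa * Q 2 3) - \<i> * C * Ei * x * (Q 1 4 + \<i> * aa * Q 2 4) - \<i> * C * Ei * (Q 1 6 + \<i> * aa * Q 2 6)"
      unfolding u3_def u4_def u6_def C_def aa_def by (simp add: algebra_simps i2)
    then show ?thesis using A1 A2 Wq[of 3] Wq[of 4] Wq[of 6] by (simp add: aa_def)
  qed
  have eB: "(\<i> * C * x - \<i> * of_real b) * u3 + u4 + \<i> * C * u5 = 0" using B0 by (simp add: u3_def u4_def u5_def C_def algebra_simps)
  have eB': "(\<i> * C * x - \<i> * of_real b - aa * C) * u3 - u4 + \<i> * C * u5 = 0"
  proof -
    have "(\<i> * C * x - \<i> * of_real b - aa * C) * u3 - u4 + \<i> * C * u5 =
      ((\<i> * of_real c * x - \<i> * of_real b) * (E * P 3 + E * Q 1 3) - Ei * P 4 + Ei * Q 1 4 + \<i> * of_real c * (E * P 5 + E * Q 1 5))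
      + \<i> * aa * (\<i> * of_real c * E * P 3 + (\<i> * of_real c * x - \<i> * of_real b) * E * Q 2 3 + Ei * Q 2 4 + \<i> * of_real c * (E * Q 2 5))
      - (\<i> * C * x - \<i> * of_real b) * E * (Q 1 3 + \<i> * aa * Q 2 3) - Ei * (Q 1 4 + \<i> * aa * Q 2 4) - \<i> * C * E * (Q 1 5 + \<i> * aa * Q 2 5)"
      unfolding u3_def u4_def u5_def C_def aa_def by (simp add: algebra_simps i2)
    then show ?thesis using B1 B2 Wq[of 3] Wq[of 4] Wq[of 5] by (simp add: aa_def)
  qed
  have s1: "2 * u3 - aa * C * u4 = 0"
  proof -
    have "2 * u3 - aa * C * u4 = (u3 + \<i> * C * x * u4 + \<i> * C * u6) + (u3 - \<i> * C * x * u4 - \<i> * C * u6 - aa * C * u4)"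
      by (simp add: algebra_simps)
    then show ?thesis using eA eA' by simp
  qed
  have s2: "aa * C * u3 + 2 * u4 = 0"
  proof -
    have "aa * C * u3 + 2 * u4 = ((\<i> * C * x - \<i> * of_real b) * u3 + u4 + \<i> * C * u5) - ((\<i> * C * x - \<i> * of_real b - aa * C) * u3 - u4 + \<i> * C * u5)"
      by (simp add: algebra_simps)
    then show ?thesis using eB eB' by simp
  qed
  have "(4 + aa * aa * C * C) * u3 = 2 * (2 * u3 - aa * C * u4) + aa * C * (aa * C * u3 + 2 * u4)"
    by (simp add: algebra_simps)
  then have "(4 + aa * aa * C * C) * u3 = 0" using s1 s2 by simp
  moreover have "4 + aa * aa * C * C \<noteq> 0"
  proof -
    have "4 + aa * aa * C * C = complex_of_real (4 + (a * c) * (a * c))" by (simp add: aa_def C_def algebra_simps)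
    moreover have "4 + (a * c) * (a * c) > 0" by (simp add: add_pos_nonneg)
    ultimately show ?thesis by (metis of_real_eq_0_iff less_irrefl)
  qed
  ultimately have u3: "u3 = 0" by simp
  then have u4: "u4 = 0" using s2 by simp
  have u6: "u6 = 0" using eA u3 u4 c by (simp add: C_def)
  have u5: "u5 = 0" using eB u3 u4 c by (simp add: C_def)
  have "E \<noteq> 0" "Ei \<noteq> 0" by (simp_all add: E_def Ei_def)
  then show ?thesis using u3 u4 u5 u6 by (simp add: u3_def u4_def u5_def u6_def P_def)
qed


lemma exhaust_6':
  fixes x :: 6
  shows "x = 1 \<or> x = 2 \<or> x = 3 \<or> x = 4 \<or> x = 5 \<or> x = 6"
proof (induct x)
  case (of_int z)
  then have "z = 0 \<or> z = 1 \<or> z = 2 \<or> z = 3 \<or> z = 4 \<or> z = 5" by fastforce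
  then show ?case by auto
qed

lemma const_dir:
  fixes f :: "real^6 \<Rightarrow> complex"
  assumes df: "\<And>p. f differentiable (at p)" and z: "\<And>p. partial k f p = 0"
  shows "f (q + t *\<^sub>R axis k 1) = f q"
proof -
  have "norm ((\<lambda>s. f (q + s *\<^sub>R axis k 1)) t - (\<lambda>s. f (q + s *\<^sub>R axis k 1)) 0) \<le> 0 * \<bar>t\<bar>"
  proof (rule vd_bound)
    fix x
    show "((\<lambda>s. f (q + s *\<^sub>R axis k 1)) has_vector_derivative 0) (at x)"
      using line_vd_partial[of f q x k, OF df] z by simp
  qed simp
  then show ?thesis by simp
qed

definition pt :: "real \<Rightarrow> real \<Rightarrow> real^6" where
  "pt t x = (\<chi> i. if i = 1 then t else if i = 2 then x else 0)"

lemma decomp6: "g = pt (g$1) (g$2) + g$3 *\<^sub>R axis 3 1 + g$4 *\<^sub>R axis 4 1 + g$5 *\<^sub>R axis 5 1 + g$6 *\<^sub>R axis 6 1"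
  unfolding vec_eq_iff
proof
  fix i :: 6
  show "g $ i = (pt (g$1) (g$2) + g$3 *\<^sub>R axis 3 1 + g$4 *\<^sub>R axis 4 1 + g$5 *\<^sub>R axis 5 1 + g$6 *\<^sub>R axis 6 1) $ i"
    using exhaust_6'[of i] by (auto simp: pt_def axis_def)
qed

lemma f_dep:
  fixes f :: "real^6 \<Rightarrow> complex"
  assumes df: "\<And>p. f differentiable (at p)" and z: "\<And>k p. k \<in> {3,4,5,6} \<Longrightarrow> partial k f p = 0"
  shows "f g = f (pt (g$1) (g$2))"
proof -
  have "f g = f (pt (g$1) (g$2) + g$3 *\<^sub>R axis 3 1 + g$4 *\<^sub>R axis 4 1 + g$5 *\<^sub>R axis 5 1 + g$6 *\<^sub>R axis 6 1)"
    using decomp6 by metis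
  also have "\<dots> = f (pt (g$1) (g$2))"
    using const_dir[OF df] z by simp
  finally show ?thesis .
qed

lemma Gmul12: "Gmul \<gamma> g $ 1 = \<gamma>$1 + g$1" "Gmul \<gamma> g $ 2 = \<gamma>$2 + g$2"
  by (simp_all add: Gmul_def)

lemma lat1: "pt a0 0 \<in> Lattice a0 P"
  unfolding Lattice_def by (rule CollectI, rule exI[of _ 1], rule exI[of _ 0]) (auto simp: pt_def intro!: exI[of _ 0])
lemma lat2: "pt 0 1 \<in> Lattice a0 P"
  unfolding Lattice_def by (rule CollectI, rule exI[of _ 0], rule exI[of _ 1]) (auto simp: pt_def intro!: exI[of _ 0])


lemma shift_int:
  fixes h :: "real \<Rightarrow> complex"
  assumes "\<And>t. h (p + t) = h t"
  shows "h (t + real_of_int n * p) = h t"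
proof -
  have pos: "h (t + real m * p) = h t" for m :: nat and t
  proof (induction m arbitrary: t)
    case (Suc m)
    have "h (t + real (Suc m) * p) = h (p + (t + real m * p))" by (simp add: algebra_simps)
    also have "\<dots> = h (t + real m * p)" by (rule assms)
    finally show ?case using Suc by simp
  qed simp
  show ?thesis
  proof (cases "n \<ge> 0")
    case True
    then obtain m where "n = int m" by (metis nonneg_eq_int)
    then show ?thesis using pos by simp
  next
    case False
    then obtain m where m: "n = - int m" by (metis le_cases neg_0_le_iff_le nonneg_eq_int minus_minus)
    have "h t = h ((t - real m * p) + real m * p)" by simp
    also have "\<dots> = h (t - real m * p)" by (rule pos)
    finally show ?thesis using m by simp
  qed
qed

lemma continuous_pt: "continuous_on UNIV (\<lambda>p::real \<times> real. pt (fst p) (snd p))"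
  unfolding pt_def
proof (intro continuous_on_vec_lambda)
  fix i :: 6
  show "continuous_on UNIV (\<lambda>p::real \<times> real. if i = 1 then fst p else if i = 2 then snd p else 0)"
    by (cases "i = 1"; cases "i = 2") (auto intro!: continuous_intros)
qed

lemma bounded_periodic:
  fixes h :: "real \<Rightarrow> real \<Rightarrow> complex"
  assumes cont: "continuous_on UNIV (\<lambda>p. h (fst p) (snd p))" and a0: "a0 > 0"
    and p1: "\<And>t x. h (a0 + t) x = h t x" and p2: "\<And>t x. h t (1 + x) = h t x"
  shows "\<exists>M. \<forall>t x. norm (h t x) \<le> M"
proof -
  have "compact ((\<lambda>p. h (fst p) (snd p)) ` cbox (0, 0) (a0, 1))"
    by (rule compact_continuous_image[OF continuous_on_subset[OF cont] compact_cbox]) simp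
  then obtain M where M: "\<And>y. y \<in> (\<lambda>p. h (fst p) (snd p)) ` cbox (0, 0) (a0, 1) \<Longrightarrow> norm y \<le> M"
    using compact_imp_bounded bounded_iff by metis
  have "norm (h t x) \<le> M" for t x
  proof -
    define n where "n = - \<lfloor>t / a0\<rfloor>"
    define m where "m = - \<lfloor>x\<rfloor>"
    define t' where "t' = t + real_of_int n * a0"
    define x' where "x' = x + real_of_int m * 1"
    have ht: "h t' y = h t y" for y unfolding t'_def by (rule shift_int[of "\<lambda>t. h t y"]) (rule p1)
    have hx: "h s x' = h s x" for s unfolding x'_def by (rule shift_int[of "h s"]) (rule p2)
    have "t' \<ge> 0" "t' \<le> a0"
    proof -
      have "real_of_int \<lfloor>t / a0\<rfloor> \<le> t / a0" "t / a0 < real_of_int \<lfloor>t / a0\<rfloor> + 1" by linarith+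
      then have "real_of_int \<lfloor>t / a0\<rfloor> * a0 \<le> (t / a0) * a0" "(t / a0) * a0 < (real_of_int \<lfloor>t / a0\<rfloor> + 1) * a0"
        using a0 by (intro mult_right_mono mult_strict_right_mono; simp)+
      then have "real_of_int \<lfloor>t / a0\<rfloor> * a0 \<le> t" "t < (real_of_int \<lfloor>t / a0\<rfloor> + 1) * a0"
        using a0 by simp_all
      then show "t' \<ge> 0" "t' \<le> a0" by (simp_all add: t'_def n_def algebra_simps)
    qed
    moreover have "x' \<ge> 0" "x' \<le> 1" unfolding x'_def m_def by linarith+
    ultimately have "(t', x') \<in> cbox (0, 0) (a0, 1)" by (simp add: cbox_Pair_iff)
    then have "norm (h t' x') \<le> M" using M by force
    then show ?thesis using ht hx by simp
  qed
  then show ?thesis by blast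
qed


lemma pde_const_clean:
  fixes f :: "real^6 \<Rightarrow> complex"
  assumes a: "a \<noteq> 0" and c: "c \<noteq> 0" and a0: "a0 > 0" and sm: "smooth f" and gi: "gamma_inv a0 P f"
    and W: "\<And>g. partial 1 f g + \<i> * of_real a * partial 2 f g = 0"
    and A: "\<And>g. of_real (exp (g$1)) * partial 3 f g + \<i> * of_real c * (of_real (exp (- g$1)) * (of_real (g$2) * partial 4 f g + partial 6 f g)) = 0"
    and B: "\<And>g. (\<i> * of_real c * of_real (g$2) - \<i> * of_real b) * of_real (exp (g$1)) * partial 3 f g + of_real (exp (- g$1)) * partial 4 f g + \<i> * of_real c * (of_real (exp (g$1)) * partial 5 f g) = 0"
  shows "\<exists>z. \<forall>g. f g = z"
proof -
  have df: "\<And>p. f differentiable (at p)" using smooth_D(1)[OF sm] .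
  have z: "\<And>k p. k \<in> {3,4,5,6} \<Longrightarrow> partial k f p = 0"
    using P_zero[OF a c sm W A B] by auto
  define h where "h = (\<lambda>t x. f (pt t x))"
  have fh: "f g = h (g$1) (g$2)" for g unfolding h_def by (rule f_dep[OF df z])
  have ptc: "pt t x $ 1 = t" "pt t x $ 2 = x" for t x by (simp_all add: pt_def)
  have p1: "h (a0 + t) x = h t x" for t x
  proof -
    have "h t x = f (Gmul (pt a0 0) (pt t x))" using gi lat1 unfolding gamma_inv_def h_def by metis
    also have "\<dots> = h (a0 + t) x" by (simp add: fh Gmul12 ptc)
    finally show ?thesis by simp
  qed
  have p2: "h t (1 + x) = h t x" for t x
  proof -
    have "h t x = f (Gmul (pt 0 1) (pt t x))" using gi lat2 unfolding gamma_inv_def h_def by metis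
    also have "\<dots> = h t (1 + x)" by (simp add: fh Gmul12 ptc)
    finally show ?thesis by simp
  qed
  have fc: "continuous_on UNIV f"
    using df differentiable_imp_continuous_within continuous_at_imp_continuous_on by blast
  have hc: "continuous_on UNIV (\<lambda>p. h (fst p) (snd p))"
    unfolding h_def using continuous_on_compose2[OF fc continuous_pt] by simp
  obtain M where M: "\<And>t x. norm (h t x) \<le> M" using bounded_periodic[OF hc a0 p1 p2] by blast
  define L where "L = (\<lambda>w::complex. pt (- Im w / a) (Re w))"
  define Fz where "Fz = (\<lambda>w. f (L w))"
  have Ldec: "L w = (- Im w / a) *\<^sub>R axis 1 1 + Re w *\<^sub>R axis 2 1" for w
    unfolding vec_eq_iff L_def pt_def
  proof
    fix i :: 6
    show "(\<chi> i. if i = 1 then - Im w / a else if i = 2 then Re w else 0) $ i = ((- Im w / a) *\<^sub>R axis 1 1 + Re w *\<^sub>R axis 2 1) $ i"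
      using exhaust_6'[of i] by (auto simp: axis_def)
  qed
  have Llin: "bounded_linear L"
  proof -
    have "linear L" unfolding L_def pt_def by (intro linearI) (auto simp: vec_eq_iff diff_divide_distrib)
    then show ?thesis by (simp add: linear_conv_bounded_linear)
  qed
  have hol: "(Fz has_field_derivative partial 2 f (L z)) (at z)" for z
  proof -
    obtain Df where Df: "(f has_derivative Df) (at (L z))" using df by (auto simp: differentiable_def)
    have "((\<lambda>w. f (L w)) has_derivative (\<lambda>w. Df (L w))) (at z)"
      using has_derivative_compose[OF bounded_linear_imp_has_derivative[OF Llin] Df] by (simp add: o_def)
    moreover have "Df (L w) = partial 2 f (L z) * w" for w
    proof -
      have lin: "linear Df" using Df has_derivative_linear by blast
      have "Df (L w) = (- Im w / a) *\<^sub>R Df (axis 1 1) + Re w *\<^sub>R Df (axis 2 1)"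
        unfolding Ldec by (simp only: linear_add[OF lin] linear_scale[OF lin])
      also have "\<dots> = (- Im w / a) *\<^sub>R partial 1 f (L z) + Re w *\<^sub>R partial 2 f (L z)"
        using partial_eq[OF Df] by simp
      also have "partial 1 f (L z) = - (\<i> * of_real a * partial 2 f (L z))" using W[of "L z"] by (simp add: eq_neg_iff_add_eq_0)
      finally have "Df (L w) = (- Im w / a) *\<^sub>R - (\<i> * of_real a * partial 2 f (L z)) + Re w *\<^sub>R partial 2 f (L z)" .
      also have "\<dots> = partial 2 f (L z) * (of_real (Re w) + \<i> * of_real (Im w))"
        using a by (simp add: scaleR_conv_of_real field_simps)
      also have "\<dots> = partial 2 f (L z) * w" using complex_eq[of w] by simp
      finally show ?thesis .
    qed
    ultimately show ?thesis unfolding has_field_derivative_def Fz_def by simp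
  qed
  have "Fz holomorphic_on UNIV"
    unfolding holomorphic_on_def using hol field_differentiable_def field_differentiable_at_within by blast
  moreover have "bounded (range Fz)"
    unfolding bounded_iff
  proof (intro exI[of _ M] ballI)
    fix y assume "y \<in> range Fz"
    then obtain w where "y = Fz w" by blast
    then show "norm y \<le> M" using M[of "- Im w / a" "Re w"] by (simp add: Fz_def L_def h_def)
  qed
  ultimately have "Fz constant_on UNIV" by (rule Liouville_theorem)
  then obtain k where k: "\<And>w. Fz w = k" by (auto simp: constant_on_def)
  have "h t x = k" for t x
  proof -
    have "Fz (of_real x - \<i> * of_real (a * t)) = h t x"
      using a by (simp add: Fz_def L_def h_def)
    then show ?thesis using k by simp
  qed
  then have "\<forall>g. f g = k" using fh by simp
  then show ?thesis by blast
qed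



lemma exhaust_6:
  fixes x :: 6
  shows "x = 1 \<or> x = 2 \<or> x = 3 \<or> x = 4 \<or> x = 5 \<or> x = 6"
proof (induct x)
  case (of_int z)
  then have "z = 0 \<or> z = 1 \<or> z = 2 \<or> z = 3 \<or> z = 4 \<or> z = 5" by fastforce
  then show ?case by auto
qed

lemma UNIV_6: "UNIV = {1, 2, 3, 4, 5, 6::6}"
  using exhaust_6 by auto

lemma sum_6: "sum f (UNIV::6 set) = f 1 + f 2 + f 3 + f 4 + f 5 + f 6"
  unfolding UNIV_6 by (simp add: ac_simps)


lemma ins_eq_sl: "finite A \<Longrightarrow> finite B \<Longrightarrow> (insert (a::nat) A = insert b B) \<longleftrightarrow> (sorted_list_of_set (insert a A) = sorted_list_of_set (insert b B))"
  by (metis finite_insert sorted_list_of_set.set_sorted_key_list_of_set)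

lemma ladd_apply[simp]: "ladd \<alpha> \<beta> K = \<alpha> K + \<beta> K" by (simp add: ladd_def)
lemma lscale_apply[simp]: "lscale z \<alpha> K = z * \<alpha> K" by (simp add: lscale_def)
lemma lzero_apply[simp]: "lzero K = 0" by (simp add: lzero_def)
lemma lsum_apply[simp]: "lsum F S K = (\<Sum>i\<in>S. F i K)" by (simp add: lsum_def)
lemma mono_apply[simp]: "mono I K = (if K = I then 1 else 0)" by (simp add: mono_def)

lemma shuffle_sign_empty1[simp]: "shuffle_sign {} J = 1" by (simp add: shuffle_sign_def)
lemma shuffle_sign_empty2[simp]: "shuffle_sign I {} = 1" by (simp add: shuffle_sign_def)

lemma wedge_mono_empty: "finite K \<Longrightarrow> wedge \<alpha> (mono {}) K = \<alpha> K"
proof -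
  assume fK: "finite K"
  have "wedge \<alpha> (mono {}) K = (\<Sum>I\<in>Pow K. if I = K then \<alpha> K else 0)"
    unfolding wedge_def by (rule sum.cong) auto
  also have "\<dots> = \<alpha> K" using fK by simp
  finally show ?thesis .
qed

lemma wedge_lzero_left[simp]: "wedge lzero \<beta> = lzero"
  unfolding wedge_def fun_eq_iff by simp
lemma wedge_lzero_right[simp]: "wedge \<alpha> lzero = lzero"
  unfolding wedge_def fun_eq_iff by simp

lemma wedge_gen_left:
  assumes "finite L"
  shows "wedge (gen i) \<beta> L = (if i \<in> L then (-1) ^ card {j\<in>L. j < i} * \<beta> (L - {i}) else 0)"
proof -
  have "wedge (gen i) \<beta> L = (\<Sum>I\<in>Pow L. if I = {i} then shuffle_sign {i} (L - {i}) * \<beta> (L - {i}) else 0)"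
    unfolding wedge_def by (rule sum.cong) (simp_all add: gen_def)
  also have "\<dots> = (if {i} \<in> Pow L then shuffle_sign {i} (L - {i}) * \<beta> (L - {i}) else 0)"
    by (rule sum.delta) (simp add: assms)
  also have "shuffle_sign {i} (L - {i}) = (-1) ^ card {j\<in>L. j < i}"
  proof -
    have "{(i', j). i' \<in> {i} \<and> j \<in> L - {i} \<and> j < i'} = Pair i ` {j\<in>L. j < i}" by auto
    then have "card {(i', j). i' \<in> {i} \<and> j \<in> L - {i} \<and> j < i'} = card {j\<in>L. j < i}"
      by (simp add: card_image inj_on_def)
    then show ?thesis by (simp add: shuffle_sign_def)
  qed
  finally show ?thesis by simp
qed

lemma wedge_gen_right:
  assumes "finite L"
  shows "wedge \<beta> (gen j) L = (if j \<in> L then (-1) ^ card {i\<in>L. j < i} * \<beta> (L - {j}) else 0)"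
proof -
  have "wedge \<beta> (gen j) L = (\<Sum>I\<in>Pow L. if I = L - {j} then (if j \<in> L then shuffle_sign (L - {j}) {j} * \<beta> (L - {j}) else 0) else 0)"
    unfolding wedge_def
  proof (rule sum.cong)
    fix I assume "I \<in> Pow L"
    then have "(L - I = {j}) = (I = L - {j} \<and> j \<in> L)" by auto
    then show "shuffle_sign I (L - I) * \<beta> I * gen j (L - I) =
      (if I = L - {j} then (if j \<in> L then shuffle_sign (L - {j}) {j} * \<beta> (L - {j}) else 0) else 0)"
      by (auto simp: gen_def)
  qed simp
  also have "\<dots> = (if j \<in> L then shuffle_sign (L - {j}) {j} * \<beta> (L - {j}) else 0)"
    by (subst sum.delta) (auto simp add: assms)
  also have "shuffle_sign (L - {j}) {j} = (-1) ^ card {i\<in>L. j < i}"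
  proof -
    have "{(i, j'). i \<in> L - {j} \<and> j' \<in> {j} \<and> j' < i} = (\<lambda>i. (i, j)) ` {i\<in>L. j < i}" by auto
    then have "card {(i, j'). i \<in> L - {j} \<and> j' \<in> {j} \<and> j' < i} = card {i\<in>L. j < i}"
      by (simp add: card_image inj_on_def)
    then show ?thesis by (simp add: shuffle_sign_def)
  qed
  finally show ?thesis .
qed

lemma wedge_two:
  assumes "p < q"
  shows "wedge \<alpha> \<beta> {p,q} = \<alpha> {} * \<beta> {p,q} + \<alpha> {p} * \<beta> {q} - \<alpha> {q} * \<beta> {p} + \<alpha> {p,q} * \<beta> {}"
proof -
  have d: "p \<noteq> q" using assms by simp
  have P: "Pow {p,q} = insert {} (insert {p} (insert {q} {{p,q}}))" by (auto simp: Pow_insert)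
  have s1: "shuffle_sign {p} {q} = 1"
  proof -
    have "{(i, j). i \<in> {p} \<and> j \<in> {q} \<and> j < i} = {}" using assms by auto
    then show ?thesis by (simp only: shuffle_sign_def) simp
  qed
  have s2: "shuffle_sign {q} {p} = -1"
  proof -
    have "{(i, j). i \<in> {q} \<and> j \<in> {p} \<and> j < i} = {(q,p)}" using assms by auto
    then show ?thesis by (simp add: shuffle_sign_def)
  qed
  have e1: "{p,q} - {p} = {q}" "{p,q} - {q} = {p}" "{p,q} - {p,q} = {}" "{p,q} - {} = {p,q}" using d by auto
  have n: "{} \<notin> insert {p} (insert {q} {{p,q}})" "{p} \<notin> insert {q} {{p,q}}" "{q} \<notin> {{p,q}}"
    using d by (auto simp: doubleton_eq_iff)
  show ?thesis unfolding wedge_def P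
    apply (subst sum.insert, simp, rule n)+
    apply (simp only: e1 s1 s2 sum.empty sum.insert)
    apply simp
    done
qed


lemma ext_map_ladd: "ext_map img (ladd \<alpha> \<beta>) = ladd (ext_map img \<alpha>) (ext_map img \<beta>)"
  by (simp add: ext_map_def fun_eq_iff distrib_right sum.distrib)
lemma ext_map_lscale: "ext_map img (lscale z \<alpha>) = lscale z (ext_map img \<alpha>)"
  by (simp add: ext_map_def fun_eq_iff sum_distrib_left mult.assoc)
lemma ext_map_lzero: "ext_map img lzero = lzero"
  by (simp add: ext_map_def fun_eq_iff)
lemma ext_map_lsum: "finite S \<Longrightarrow> ext_map img (lsum F S) = lsum (\<lambda>i. ext_map img (F i)) S"
  by (simp add: ext_map_def fun_eq_iff sum_distrib_right sum.swap[of _ S])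
lemma ext_map_mono: "J \<subseteq> {0..<6} \<Longrightarrow> ext_map img (mono J) = wedge_list (map img (sorted_list_of_set J))"
proof -
  assume J: "J \<subseteq> {0..<6}"
  show ?thesis unfolding ext_map_def fun_eq_iff lsum_apply lscale_apply mono_apply
  proof
    fix x
    have "(\<Sum>i\<in>Pow {0..<6}. (if i = J then 1 else 0) * wedge_list (map img (sorted_list_of_set i)) x)
       = (\<Sum>i\<in>Pow {0..<6}. (if i = J then wedge_list (map img (sorted_list_of_set J)) x else 0))"
      by (rule sum.cong) auto
    also have "\<dots> = wedge_list (map img (sorted_list_of_set J)) x" using J by (subst sum.delta) auto
    finally show "(\<Sum>i\<in>Pow {0..<6}. (if i = J then 1 else 0) * wedge_list (map img (sorted_list_of_set i)) x) = wedge_list (map img (sorted_list_of_set J)) x" .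
  qed
qed

lemma wedge_cong_right: "(\<And>K. finite K \<Longrightarrow> \<beta> K = \<beta>' K) \<Longrightarrow> finite L \<Longrightarrow> wedge \<alpha> \<beta> L = wedge \<alpha> \<beta>' L"
  unfolding wedge_def by (rule sum.cong) (auto intro: finite_subset)
lemma wedge_cong_left: "(\<And>K. finite K \<Longrightarrow> \<alpha> K = \<alpha>' K) \<Longrightarrow> finite L \<Longrightarrow> wedge \<alpha> \<beta> L = wedge \<alpha>' \<beta> L"
  unfolding wedge_def by (rule sum.cong) (auto intro: finite_subset)

lemma wedge_list_1: "finite K \<Longrightarrow> wedge_list [x] K = x K"
  by (simp add: wedge_list_def wedge_mono_empty)
lemma wedge_list_2: "finite K \<Longrightarrow> wedge_list [x, y] K = wedge x y K"
  unfolding wedge_list_def by (simp add: wedge_cong_right[OF wedge_mono_empty])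



lemma sum_upto6: "(\<Sum>j\<in>{0..<6::nat}. f j) = f 0 + f 1 + f 2 + f 3 + f 4 + f 5"
  by (simp add: eval_nat_numeral)

lemma dtheta0: "dtheta a b c 0 = lzero"
proof -
  have "lsum (\<lambda>j. lscale (theta_coef a b c 0 j) (de j)) {0..<6} = lzero"
    by (simp add: fun_eq_iff sum_upto6 theta_coef_def de_def)
  then show ?thesis by (simp add: dtheta_def to_theta_def ext_map_lzero)
qed

lemma to_theta_de2: "to_theta a b c (de 2) = ladd (lscale (-1) (wedge_list [e_in_theta a b c 0, e_in_theta a b c 2])) (lscale (-1) (wedge_list [e_in_theta a b c 1, e_in_theta a b c 4]))"
  by (simp add: de_def to_theta_def ext_map_ladd ext_map_lscale ext_map_mono)


lemma to_theta_de: "to_theta a b c (de j) =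
  (if j = 2 then ladd (lscale (-1) (wedge_list [e_in_theta a b c 0, e_in_theta a b c 2])) (lscale (-1) (wedge_list [e_in_theta a b c 1, e_in_theta a b c 4]))
   else if j = 3 then ladd (wedge_list [e_in_theta a b c 0, e_in_theta a b c 3]) (lscale (-1) (wedge_list [e_in_theta a b c 1, e_in_theta a b c 5]))
   else if j = 4 then lscale (-1) (wedge_list [e_in_theta a b c 0, e_in_theta a b c 4])
   else if j = 5 then wedge_list [e_in_theta a b c 0, e_in_theta a b c 5]
   else lzero)"
  by (simp add: de_def to_theta_def ext_map_ladd ext_map_lscale ext_map_mono ext_map_lzero)

lemma dtheta_eq: "dtheta a b c k = lsum (\<lambda>j. lscale (theta_coef a b c k j) (to_theta a b c (de j))) {0..<6}"
  by (simp add: dtheta_def to_theta_def ext_map_lsum ext_map_lscale)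

lemma eval2: "p < q \<Longrightarrow> wedge_list [x, y] {p,q} = x {} * y {p,q} + x {p} * y {q} - x {q} * y {p} + x {p,q} * y {}"
  by (simp add: wedge_list_2 wedge_two)

lemma eth_empty[simp]: "e_in_theta a b c j {} = 0"
  by (simp add: e_in_theta_def gen_def)

lemma dth_vals: assumes "a \<noteq> 0" "c \<noteq> 0" shows
  "dtheta a b c 1 {3,4} = - 1 / (2 * of_real a)"
  "dtheta a b c 1 {3,5} = of_real c / 4"
  "dtheta a b c 2 {3,4} = of_real c / 4"
  "dtheta a b c 2 {3,5} = 1 / (2 * of_real a)"
  using assms
  by (simp_all add: dtheta_eq sum_upto6 to_theta_de eval2 theta_coef_def e_in_theta_def gen_def ins_eq_sl field_simps)


lemma Collect_mem_insert: "{x \<in> insert a A. P x} = (if P a then insert a {x \<in> A. P x} else {x \<in> A. P x})"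
  by auto

lemma wedge_gen_left':
  "finite L \<Longrightarrow> wedge (gen i) \<beta> L = (if i \<in> L then (-1) ^ card (L \<inter> {..<i}) * \<beta> (L - {i}) else 0)"
proof -
  have "{j\<in>L. j < i} = L \<inter> {..<i}" by auto
  then show "finite L \<Longrightarrow> ?thesis" by (simp add: wedge_gen_left)
qed
lemma wedge_gen_right':
  "finite L \<Longrightarrow> wedge \<beta> (gen j) L = (if j \<in> L then (-1) ^ card (L \<inter> {j<..}) * \<beta> (L - {j}) else 0)"
proof -
  have "{i\<in>L. j < i} = L \<inter> {j<..}" by auto
  then show "finite L \<Longrightarrow> ?thesis" by (simp add: wedge_gen_right)
qed
lemmas dth_vals' = dth_vals[unfolded One_nat_def]

lemma dmono_cons: "finite L \<Longrightarrow> dmono_list a b c (k # ks) L =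
   wedge (dtheta a b c k) (wedge_list (map gen ks)) L - wedge (gen k) (dmono_list a b c ks) L"
  by simp

lemma dmono_nil: "dmono_list a b c [] = lzero" by simp

lemma wl_gen1: "finite L \<Longrightarrow> wedge \<alpha> (wedge_list [gen j]) L = wedge \<alpha> (gen j) L"
  by (rule wedge_cong_right) (simp_all add: wedge_list_1)

lemma wl_nil: "wedge_list [] = mono {}" by (simp add: wedge_list_def)

lemmas dm_simps = dmono_cons wl_gen1 wl_nil wedge_mono_empty wedge_gen_left' wedge_gen_right' Int_insert_left insert_Diff_if

lemma dmono_vals: assumes "a \<noteq> 0" "c \<noteq> 0" shows
  "dmono_list a b c [1] {3,4} = - 1 / (2 * of_real a)"
  "dmono_list a b c [0,1] {0,3,4} = 1 / (2 * of_real a)"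
  "dmono_list a b c [1,2] {2,3,4} = - 1 / (2 * of_real a)"
  "dmono_list a b c [0,1,2] {0,2,3,4} = 1 / (2 * of_real a)"
  "dmono_list a b c [0,1] {2,3,4} = 0"
  using assms by (simp_all add: dm_simps dth_vals dth_vals' dtheta0)



lemma partial_const[simp]: "partial j (\<lambda>h. z) g = 0"
  by (simp add: partial_def)

lemma to_theta_lzero[simp]: "to_theta a b c lzero = lzero"
  by (simp add: to_theta_def ext_map_lzero)

lemma dfun_zero[simp]: "dfun a b c (\<lambda>h. 0) g = lzero"
proof -
  have "lsum (\<lambda>j. lscale (partial j (\<lambda>h. 0) g) (dcoord g j)) UNIV = lzero"
    by (simp add: fun_eq_iff)
  then show ?thesis by (simp add: dfun_def)
qed

lemma smooth_const: "smooth (\<lambda>g. z)"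
proof -
  have "\<exists>z. f = (\<lambda>g. z) \<Longrightarrow> smooth f" for f
  proof (coinduction arbitrary: f rule: smooth.coinduct)
    case (smooth f)
    then obtain z where "f = (\<lambda>g. z)" by blast
    then show ?case
      by (intro exI[of _ "\<lambda>g. z"] conjI) (auto intro!: exI[of _ 0] simp: fun_eq_iff)
  qed
  then show ?thesis by blast
qed

lemma bideg_sub: "K \<in> bideg p 0 \<Longrightarrow> K \<subseteq> {0,1,2}"
proof -
  assume K: "K \<in> bideg p 0"
  then have "K \<subseteq> {0..<6}" "card (K \<inter> {3,4,5}) = 0" by (auto simp: bideg_def)
  moreover have "finite (K \<inter> {3,4,5})" by simp
  ultimately have "K \<inter> {3,4,5} = {}" by simp
  show ?thesis
  proof
    fix x assume x: "x \<in> K"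
    with \<open>K \<subseteq> {0..<6}\<close> have "x < 6" by auto
    moreover from x \<open>K \<inter> {3,4,5} = {}\<close> have "x \<noteq> 3" "x \<noteq> 4" "x \<noteq> 5" by auto
    ultimately show "x \<in> {0,1,2}" by auto
  qed
qed

lemma wedge_mono_notsub: "\<not> K \<subseteq> L \<Longrightarrow> wedge \<alpha> (mono K) L = 0"
  unfolding wedge_def by (rule sum.neutral) auto

lemma dform_red:
  assumes "\<And>K h. \<not> K \<subseteq> {0,1,2} \<Longrightarrow> \<psi> h K = 0"
  shows "dform a b c \<psi> g L = (\<Sum>K\<in>Pow {0,1,2}. wedge (dfun a b c (\<lambda>h. \<psi> h K) g) (mono K) L + \<psi> g K * dmono_list a b c (sorted_list_of_set K) L)"
  unfolding dform_def lsum_apply ladd_apply lscale_apply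
proof (rule sum.mono_neutral_right)
  show "Pow {0, 1, 2} \<subseteq> Pow {0..<6::nat}" by auto
  show "\<forall>i\<in>Pow {0..<6} - Pow {0, 1, 2}. wedge (dfun a b c (\<lambda>h. \<psi> h i) g) (mono i) L + \<psi> g i * dmono_list a b c (sorted_list_of_set i) L = 0"
  proof
    fix K assume "K \<in> Pow {0..<6} - Pow {0, 1, 2::nat}"
    then have "\<not> K \<subseteq> {0,1,2}" by auto
    then have "\<And>h. \<psi> h K = 0" using assms by blast
    then show "wedge (dfun a b c (\<lambda>h. \<psi> h K) g) (mono K) L + \<psi> g K * dmono_list a b c (sorted_list_of_set K) L = 0"
      by simp
  qed
qed simp

lemma Pow012: "Pow {0,1,2::nat} = {{},{0},{1},{2},{0,1},{0,2},{1,2},{0,1,2}}"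
  by (simp add: Pow_insert insert_commute)

lemma sum_Pow012: "(\<Sum>K\<in>Pow {0,1,2::nat}. F K) = F {} + F {0} + F {1} + F {2} + F {0,1} + F {0,2} + F {1,2} + F {0,1,2}"
  unfolding Pow012 by (simp add: ins_eq_sl add.assoc)



lemma sub012_cases: "K \<subseteq> {0,1,2::nat} \<Longrightarrow> K = {} \<or> K = {0} \<or> K = {1} \<or> K = {2} \<or> K = {0,1} \<or> K = {0,2} \<or> K = {1,2} \<or> K = {0,1,2}"
proof -
  assume "K \<subseteq> {0,1,2::nat}"
  then have "K \<in> Pow {0,1,2::nat}" by simp
  then show ?thesis by (simp only: Pow012 insert_iff empty_iff simp_thms)
qed

lemma is_form_zero: "is_form a0 P p q (\<lambda>g. lzero)"
  by (simp add: is_form_def smooth_const gamma_inv_def)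

lemma dform_zero: "dform a b c (\<lambda>g. lzero) g = lzero"
  by (simp add: dform_def fun_eq_iff)

lemma zero_in_H: "(\<lambda>g. lzero) \<in> H_Dol_p0 a b c a0 P p"
  by (simp add: H_Dol_p0_def is_form_zero dbar_def mubar_def proj_def dform_zero fun_eq_iff)

lemma H_facts:
  assumes "\<psi> \<in> H_Dol_p0 a b c a0 P p"
  shows "\<And>K h. K \<notin> bideg p 0 \<Longrightarrow> \<psi> h K = 0"
    and "\<And>K h. \<not> K \<subseteq> {0,1,2} \<Longrightarrow> \<psi> h K = 0"
    and "\<And>g L. p \<noteq> 0 \<Longrightarrow> L \<in> bideg (p - 1) 2 \<Longrightarrow> dform a b c \<psi> g L = 0"
    and "\<And>g L. L \<in> bideg p 1 \<Longrightarrow> dform a b c \<psi> g L = 0"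
    and "is_form a0 P p 0 \<psi>"
proof -
  from assms have F: "is_form a0 P p 0 \<psi>" and D: "\<And>g. dbar a b c p 0 \<psi> g = lzero"
    and M: "\<And>g. mubar a b c p 0 \<psi> g = lzero" by (auto simp: H_Dol_p0_def)
  show Z: "\<And>K h. K \<notin> bideg p 0 \<Longrightarrow> \<psi> h K = 0" using F by (auto simp: is_form_def)
  show "\<And>K h. \<not> K \<subseteq> {0,1,2} \<Longrightarrow> \<psi> h K = 0" using Z bideg_sub by blast
  show "\<And>g L. p \<noteq> 0 \<Longrightarrow> L \<in> bideg (p - 1) 2 \<Longrightarrow> dform a b c \<psi> g L = 0"
    using M by (auto simp: mubar_def proj_def fun_eq_iff lzero_def split: if_splits) (metis numeral_2_eq_2 one_add_one)
  show "\<And>g L. L \<in> bideg p 1 \<Longrightarrow> dform a b c \<psi> g L = 0"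
    using D by (auto simp: dbar_def proj_def fun_eq_iff lzero_def split: if_splits) metis
  show "is_form a0 P p 0 \<psi>" by (rule F)
qed

lemma H3: assumes "a \<noteq> 0" "c \<noteq> 0" shows "H_Dol_p0 a b c a0 P 3 = {\<lambda>g. lzero}"
proof (intro equalityI subsetI)
  fix \<psi> assume H: "\<psi> \<in> H_Dol_p0 a b c a0 P 3"
  note Z = H_facts(1)[OF H] and Z' = H_facts(2)[OF H]
  have z: "\<psi> h {} = 0" "\<psi> h {0} = 0" "\<psi> h {1} = 0" "\<psi> h {2} = 0" "\<psi> h {0,1} = 0" "\<psi> h {0,2} = 0" "\<psi> h {1,2} = 0" for h
    by (rule Z; simp add: bideg_def)+
  have "\<psi> g {0,1,2} = 0" for g
  proof -
    have "0 = dform a b c \<psi> g {0,2,3,4}"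
      by (rule H_facts(3)[OF H, symmetric]) (simp_all add: bideg_def)
    also have "\<dots> = (\<Sum>K\<in>Pow {0,1,2}. wedge (dfun a b c (\<lambda>h. \<psi> h K) g) (mono K) {0,2,3,4} + \<psi> g K * dmono_list a b c (sorted_list_of_set K) {0,2,3,4})"
      by (rule dform_red[OF Z'])
    also have "\<dots> = \<psi> g {0,1,2} * (1 / (2 * of_real a))"
      unfolding sum_Pow012 using assms by (simp add: z z[unfolded One_nat_def] wedge_mono_notsub dm_simps dth_vals dth_vals' dtheta0)
    finally show ?thesis using assms by simp
  qed
  then have "\<psi> g K = 0" for g K
  proof (cases "K \<subseteq> {0,1,2}")
    case True
    then show ?thesis using sub012_cases[OF True] z \<open>\<And>g. \<psi> g {0,1,2} = 0\<close> by auto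
  qed (simp add: Z')
  then show "\<psi> \<in> {\<lambda>g. lzero}" by (auto simp: fun_eq_iff)
qed (simp add: zero_in_H)


lemma H2: assumes "a \<noteq> 0" "c \<noteq> 0" shows "H_Dol_p0 a b c a0 P 2 = {\<lambda>g. lzero}"
proof (intro equalityI subsetI)
  fix \<psi> assume H: "\<psi> \<in> H_Dol_p0 a b c a0 P 2"
  note Z = H_facts(1)[OF H] and Z' = H_facts(2)[OF H]
  have z: "\<psi> h {} = 0" "\<psi> h {0} = 0" "\<psi> h {1} = 0" "\<psi> h {2} = 0" "\<psi> h {0,1,2} = 0" for h
    by (rule Z; simp add: bideg_def)+
  have eq: "dform a b c \<psi> g L = (\<Sum>K\<in>Pow {0,1,2}. wedge (dfun a b c (\<lambda>h. \<psi> h K) g) (mono K) L + \<psi> g K * dmono_list a b c (sorted_list_of_set K) L)" for g L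
    by (rule dform_red[OF Z'])
  have m: "dform a b c \<psi> g L = 0" if "L \<in> bideg 1 2" for g L
    using H_facts(3)[OF H, of L g] that by simp
  have "\<psi> g {0,1} = 0 \<and> \<psi> g {0,2} = 0 \<and> \<psi> g {1,2} = 0" for g
  proof -
    have e1: "\<psi> g {0,1} * (1 / (2 * of_real a)) - \<psi> g {0,2} * (of_real c / 4) = 0"
      using m[of "{0,3,4}" g] unfolding eq sum_Pow012 using assms
      by (simp add: bideg_def z z[unfolded One_nat_def] wedge_mono_notsub dm_simps dth_vals dth_vals' dtheta0)
    have e2: "- \<psi> g {0,1} * (of_real c / 4) - \<psi> g {0,2} * (1 / (2 * of_real a)) = 0"
      using m[of "{0,3,5}" g] unfolding eq sum_Pow012 using assms
      by (simp add: bideg_def z z[unfolded One_nat_def] wedge_mono_notsub dm_simps dth_vals dth_vals' dtheta0)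
    have e3: "\<psi> g {1,2} * (1 / (2 * of_real a)) = 0"
      using m[of "{2,3,4}" g] unfolding eq sum_Pow012 using assms
      by (simp add: bideg_def z z[unfolded One_nat_def] wedge_mono_notsub dm_simps dth_vals dth_vals' dtheta0)
    have x: "\<psi> g {0,1} = 0"
    proof -
      define A where "A = 1 / (2 * a)"
      define C where "C = c / 4"
      have e1': "of_real A * \<psi> g {0,1} - of_real C * \<psi> g {0,2} = 0" using e1 by (simp add: A_def C_def mult.commute)
      have e2': "- (of_real C * \<psi> g {0,1}) - of_real A * \<psi> g {0,2} = 0" using e2 by (simp add: A_def C_def mult.commute)
      have "of_real (A*A + C*C) * \<psi> g {0,1} = of_real A * (of_real A * \<psi> g {0,1} - of_real C * \<psi> g {0,2}) - of_real C * (- (of_real C * \<psi> g {0,1}) - of_real A * \<psi> g {0,2})"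
        by (simp add: algebra_simps)
      then have "of_real (A*A + C*C) * \<psi> g {0,1} = 0" using e1' e2' by simp
      moreover have "A*A + C*C \<noteq> 0"
      proof -
        have "A \<noteq> 0" using assms by (simp add: A_def)
        then have "A*A > 0" by (simp add: zero_less_mult_iff linorder_neq_iff disj_commute)
        moreover have "C*C \<ge> 0" by simp
        ultimately show ?thesis by linarith
      qed
      ultimately show ?thesis by (metis mult_eq_0_iff of_real_eq_0_iff)
    qed
    then have "\<psi> g {0,2} = 0" using e2 assms by simp
    with x e3 assms show ?thesis by simp
  qed
  then have "\<psi> g K = 0" for g K
  proof (cases "K \<subseteq> {0,1,2}")
    case True
    then show ?thesis using sub012_cases[OF True] z \<open>\<And>g. \<psi> g {0,1} = 0 \<and> \<psi> g {0,2} = 0 \<and> \<psi> g {1,2} = 0\<close> by auto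
  qed (simp add: Z')
  then show "\<psi> \<in> {\<lambda>g. lzero}" by (auto simp: fun_eq_iff)
qed (simp add: zero_in_H)


lemma ext_map_gen: "i < 6 \<Longrightarrow> finite K \<Longrightarrow> ext_map img (gen i) K = img i K"
  by (simp add: gen_def ext_map_mono wedge_list_1)

lemma dfun_eval: "finite K \<Longrightarrow> dfun a b c f g K = (\<Sum>j\<in>UNIV. partial j f g * to_theta a b c (dcoord g j) K)"
  by (simp add: dfun_def to_theta_def ext_map_lsum ext_map_lscale)

lemma exp_neg_of_real: "exp (- complex_of_real t) = complex_of_real (exp (- t))"
  by (metis exp_of_real of_real_minus)

lemma conv4:
  fixes C P3 P4 P6 E Ei x :: complex
  assumes "C \<noteq> 0" "P3 * E / (2 * C) + P4 * (x * Ei * \<i>) / 2 + P6 * (Ei * \<i>) / 2 = 0"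
  shows "E * P3 + \<i> * C * (Ei * (x * P4 + P6)) = 0"
proof -
  have "E * P3 + \<i> * C * (Ei * (x * P4 + P6)) = (2 * C) * (P3 * E / (2 * C) + P4 * (x * Ei * \<i>) / 2 + P6 * (Ei * \<i>) / 2)"
    using assms(1) by (simp add: field_simps)
  then show ?thesis using assms(2) by simp
qed
lemma conv5:
  fixes C P3 P4 P5 E Ei x Bc :: complex
  assumes "C \<noteq> 0" "P3 * (E * Bc / (C * 2 * \<i>) + x * E * \<i> / 2) + P4 * Ei / (2 * C) + P5 * (E * \<i>) / 2 = 0"
  shows "(\<i> * C * x - \<i> * Bc) * E * P3 + Ei * P4 + \<i> * C * (E * P5) = 0"
proof -
  have "(\<i> * C * x - \<i> * Bc) * E * P3 + Ei * P4 + \<i> * C * (E * P5) = (2 * C) * (P3 * (E * Bc / (C * 2 * \<i>) + x * E * \<i> / 2) + P4 * Ei / (2 * C) + P5 * (E * \<i>) / 2)"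
    using assms(1) by (simp add: field_simps)
  then show ?thesis using assms(2) by simp
qed

lemma pde_const:
  assumes a: "a \<noteq> 0" and c: "c \<noteq> 0" and "a0 > 0" "smooth f" "gamma_inv a0 P f"
    and d3: "\<And>g. dfun a b c f g {3} = 0" and d4: "\<And>g. dfun a b c f g {4} = 0" and d5: "\<And>g. dfun a b c f g {5} = 0"
  shows "\<exists>z. \<forall>g. f g = z"
proof (rule pde_const_clean[OF a c assms(3,4,5)])
  fix g
  have e: "partial 1 f g / (2 * of_real a) + partial 2 f g * \<i> / 2 = 0"
    using d3[of g] apply (simp add: dfun_eval sum_6 dcoord_def Let_def to_theta_def ext_map_ladd ext_map_lscale ext_map_gen)
    by (simp add: e_in_theta_def gen_def)
  show "partial 1 f g + \<i> * of_real a * partial 2 f g = 0"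
    using e a by (simp add: field_simps)
  have e4: "dfun a b c f g {4} = 0" by (rule d4)
  show "of_real (exp (g$1)) * partial 3 f g + \<i> * of_real c * (of_real (exp (- g$1)) * (of_real (g$2) * partial 4 f g + partial 6 f g)) = 0"
    using e4 apply (simp add: dfun_eval sum_6 dcoord_def Let_def to_theta_def ext_map_ladd ext_map_lscale ext_map_gen)
    apply (simp add: e_in_theta_def gen_def exp_of_real exp_neg_of_real)
    by (rule conv4) (use c in simp_all)
  have e5: "dfun a b c f g {5} = 0" by (rule d5)
  show "(\<i> * of_real c * of_real (g$2) - \<i> * of_real b) * of_real (exp (g$1)) * partial 3 f g + of_real (exp (- g$1)) * partial 4 f g + \<i> * of_real c * (of_real (exp (g$1)) * partial 5 f g) = 0"
    using e5 apply (simp add: dfun_eval sum_6 dcoord_def Let_def to_theta_def ext_map_ladd ext_map_lscale ext_map_gen)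
    apply (simp add: e_in_theta_def gen_def exp_of_real exp_neg_of_real)
    by (rule conv5) (use c in simp_all)
qed

lemma dfun_const[simp]: "dfun a b c (\<lambda>h. z) g = lzero"
proof -
  have "lsum (\<lambda>j. lscale (partial j (\<lambda>h. z) g) (dcoord g j)) UNIV = lzero"
    by (simp add: fun_eq_iff)
  then show ?thesis by (simp add: dfun_def)
qed

lemma dmono0: "dmono_list a b c [0] = lzero"
  by (simp add: dtheta0 fun_eq_iff)

lemma const_in_H1: "(\<lambda>g. lscale z (gen 0)) \<in> H_Dol_p0 a b c a0 P 1"
proof -
  have F: "is_form a0 P 1 0 (\<lambda>g. lscale z (gen 0))"
    unfolding is_form_def
  proof (intro allI conjI)
    fix K
    show "K \<notin> bideg 1 0 \<longrightarrow> (\<forall>g. lscale z (gen 0) K = 0)"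
      by (auto simp: gen_def bideg_def)
    show "smooth (\<lambda>g. lscale z (gen 0) K)" by (rule smooth_const)
    show "gamma_inv a0 P (\<lambda>g. lscale z (gen 0) K)" by (simp add: gamma_inv_def)
  qed
  have D: "dform a b c (\<lambda>g. lscale z (gen 0)) g = lzero" for g
    unfolding dform_def fun_eq_iff
  proof
    fix L
    show "lsum (\<lambda>K. ladd (wedge (dfun a b c (\<lambda>h. lscale z (gen 0) K) g) (mono K))
            (lscale (lscale z (gen 0) K) (dmono_list a b c (sorted_list_of_set K)))) (Pow {0..<6}) L = lzero L"
      by (auto simp: gen_def dmono0 dtheta0 intro!: sum.neutral)
  qed
  show ?thesis using F D
    by (simp add: H_Dol_p0_def dbar_def mubar_def proj_def fun_eq_iff)
qed

lemma H1: assumes "a \<noteq> 0" "c \<noteq> 0" "a0 > 0" shows "H_Dol_p0 a b c a0 P 1 = {\<psi>. \<exists>z. \<psi> = (\<lambda>g. lscale z (gen 0))}"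
proof (intro equalityI subsetI)
  fix \<psi> assume H: "\<psi> \<in> H_Dol_p0 a b c a0 P 1"
  note Z = H_facts(1)[OF H] and Z' = H_facts(2)[OF H]
  have z: "\<psi> h {} = 0" "\<psi> h {0,1} = 0" "\<psi> h {0,2} = 0" "\<psi> h {1,2} = 0" "\<psi> h {0,1,2} = 0" for h
    by (rule Z; simp add: bideg_def)+
  have eq: "dform a b c \<psi> g L = (\<Sum>K\<in>Pow {0,1,2}. wedge (dfun a b c (\<lambda>h. \<psi> h K) g) (mono K) L + \<psi> g K * dmono_list a b c (sorted_list_of_set K) L)" for g L
    by (rule dform_red[OF Z'])
  have m: "dform a b c \<psi> g L = 0" if "L \<in> bideg 0 2" for g L
    using H_facts(3)[OF H, of L g] that by simp
  have z12: "\<psi> g {1} = 0 \<and> \<psi> g {2} = 0" for g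
  proof -
    have e1: "\<psi> g {1} * (- 1 / (2 * of_real a)) + \<psi> g {2} * (of_real c / 4) = 0"
      using m[of "{3,4}" g] unfolding eq sum_Pow012 using assms
      by (simp add: bideg_def z z[unfolded One_nat_def] wedge_mono_notsub dm_simps dth_vals dth_vals' dtheta0)
    have e2: "\<psi> g {1} * (of_real c / 4) + \<psi> g {2} * (1 / (2 * of_real a)) = 0"
      using m[of "{3,5}" g] unfolding eq sum_Pow012 using assms
      by (simp add: bideg_def z z[unfolded One_nat_def] wedge_mono_notsub dm_simps dth_vals dth_vals' dtheta0)
    define A where "A = 1 / (2 * a)"
    define C where "C = c / 4"
    have e1': "- (of_real A * \<psi> g {1}) + of_real C * \<psi> g {2} = 0" using e1 by (simp add: A_def C_def mult.commute)
    have e2': "of_real C * \<psi> g {1} + of_real A * \<psi> g {2} = 0" using e2 by (simp add: A_def C_def mult.commute)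
    have "of_real (A*A + C*C) * \<psi> g {1} = - of_real A * (- (of_real A * \<psi> g {1}) + of_real C * \<psi> g {2}) + of_real C * (of_real C * \<psi> g {1} + of_real A * \<psi> g {2})"
      by (simp add: algebra_simps)
    then have "of_real (A*A + C*C) * \<psi> g {1} = 0" using e1' e2' by simp
    moreover have "A*A + C*C \<noteq> 0"
    proof -
      have "A \<noteq> 0" using assms by (simp add: A_def)
      then have "A*A > 0" by (simp add: zero_less_mult_iff linorder_neq_iff disj_commute)
      moreover have "C*C \<ge> 0" by simp
      ultimately show ?thesis by linarith
    qed
    ultimately have x: "\<psi> g {1} = 0" by (metis mult_eq_0_iff of_real_eq_0_iff)
    then have "\<psi> g {2} = 0" using e2 assms by simp
    with x show ?thesis by simp
  qed
  define f where "f = (\<lambda>g. \<psi> g {0})"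
  have dd: "dform a b c \<psi> g L = 0" if "L \<in> bideg 1 1" for g L
    using H_facts(4)[OF H, of L g] that by simp
  have df: "dfun a b c f g {k} = 0" if "k \<in> {3,4,5}" for g k
  proof -
    have zz: "\<psi> h {1} = 0" "\<psi> h {2} = 0" for h using z12 by auto
    have "dform a b c \<psi> g {0,k} = - dfun a b c (\<lambda>h. \<psi> h {0}) g {k}"
      using that unfolding eq sum_Pow012 using assms
      by (auto simp: z z[unfolded One_nat_def] zz zz[unfolded One_nat_def] wedge_mono_notsub dm_simps dtheta0 wedge_two ins_eq_sl)
    then have "dform a b c \<psi> g {0,k} = - dfun a b c f g {k}" by (simp add: f_def)
    moreover have "{0,k} \<in> bideg 1 1" using that by (auto simp: bideg_def)
    ultimately show ?thesis using dd by simp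
  qed
  have "smooth f" "gamma_inv a0 P f" using H_facts(5)[OF H] by (auto simp: is_form_def f_def)
  then obtain w where w: "\<And>g. f g = w"
    using pde_const[where b=b, OF assms(1,2,3) \<open>smooth f\<close> \<open>gamma_inv a0 P f\<close>] df by auto
  have "\<psi> = (\<lambda>g. lscale w (gen 0))"
  proof (intro ext)
    fix g K
    show "\<psi> g K = lscale w (gen 0) K"
    proof (cases "K \<subseteq> {0,1,2}")
      case True
      then show ?thesis using sub012_cases[OF True] z z12 w[unfolded f_def] by (auto simp: gen_def)
    qed (auto simp: Z' gen_def)
  qed
  then show "\<psi> \<in> {\<psi>. \<exists>z. \<psi> = (\<lambda>g. lscale z (gen 0))}" by blast
qed (use const_in_H1 in blast)


theorem mainTheorem4:
  fixes a b c a0 :: real and B P :: "real^2^2"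
  assumes "a \<noteq> 0" and "c \<noteq> 0"
    and "a0 > 0"
    and "\<forall>i j. B$i$j \<in> \<int>" and "det B = 1"
    and "invertible P"
    and "P ** B ** matrix_inv P = (\<chi> i j. if i = j then (if i = 1 then exp a0 else exp (- a0)) else 0)"
  shows "H_Dol_p0 a b c a0 P 1 = {\<psi>. \<exists>z. \<psi> = (\<lambda>g. lscale z (gen 0))}
       \<and> H_Dol_p0 a b c a0 P 2 = {\<lambda>g. lzero}
       \<and> H_Dol_p0 a b c a0 P 3 = {\<lambda>g. lzero}"
  using H1[OF assms(1,2,3)] H2[OF assms(1,2)] H3[OF assms(1,2)] by blast

end
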